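(* Let $L$ be a finite connected simplicial complex of dimension $2$ (having at least one $2$-simplex) in which every edge is a face of at least two $2$-simplices, and suppose $\chi(L)\le 2$. Then $L$ has at least $\rho(\chi(L))$ vertices and at least $2\alpha_0(L)-2\chi(L)$ two-simplices, where $\alpha_0(L)$ is the number of vertices of $L$.
   Context: For an integer $k\le 2$, $\rho(k)=\left\lceil \frac{7+\sqrt{49-24k}}{2}\right\rceil$. $\alpha_i(L)$ denotes the number of $i$-simplices of $L$ and $\chi$ the Euler characteristic. *)

theory Defs
  imports Complex_Main
begin

definition simplicial_complex :: "'a set set \<Rightarrow> bool" where
  "simplicial_complex K \<longleftrightarrow> finite K \<and> (\<forall>\<sigma>\<in>K. finite \<sigma> \<and> \<sigma> \<noteq> {}) \<and>
     (\<forall>\<sigma>\<in>K. \<forall>\<tau>. \<tau> \<subseteq> \<sigma> \<and> \<tau> \<noteq> {} \<longrightarrow> \<tau> \<in> K)"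

definition simplices :: "'a set set \<Rightarrow> nat \<Rightarrow> 'a set set" where
  "simplices K i = {\<sigma>\<in>K. card \<sigma> = Suc i}"

definition alpha :: "'a set set \<Rightarrow> nat \<Rightarrow> nat" where
  "alpha K i = card (simplices K i)"

definition dim_complex :: "'a set set \<Rightarrow> nat" where
  "dim_complex K = Max ((\<lambda>\<sigma>. card \<sigma> - 1) ` K)"

definition euler_char :: "'a set set \<Rightarrow> int" where
  "euler_char K = (\<Sum>\<sigma>\<in>K. (-1) ^ (card \<sigma> - 1))"

definition vertices :: "'a set set \<Rightarrow> 'a set" where
  "vertices K = {v. {v} \<in> K}"

definition connected_complex :: "'a set set \<Rightarrow> bool" where
  "connected_complex K \<longleftrightarrow> vertices K \<noteq> {} \<and>
     (\<forall>u\<in>vertices K. \<forall>v\<in>vertices K. (u, v) \<in> {(x, y). {x, y} \<in> K}\<^sup>*)"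

definition rho :: "int \<Rightarrow> int" where
  "rho k = \<lceil>(7 + sqrt (49 - 24 * real_of_int k)) / 2\<rceil>"

end

theory Submission
  imports Defs
begin

lemma cardf: "finite A \<Longrightarrow> card {x\<in>A. P x} = (\<Sum>x\<in>A. if P x then 1 else (0::nat))"
  by (subst card_eq_sum, subst sum.inter_filter) (assumption, rule refl)

lemma aux: "(a::int) - b = 4 * c \<Longrightarrow> 0 \<le> c \<Longrightarrow> b \<le> a" by linarith

theorem lemma3p2:
  fixes L :: "'a set set"
  assumes "simplicial_complex L"
    and "connected_complex L"
    and "dim_complex L = 2"
    and "\<forall>e\<in>simplices L 1. 2 \<le> card {t\<in>simplices L 2. e \<subseteq> t}"
    and "euler_char L \<le> 2"
  shows "int (alpha L 0) \<ge> rho (euler_char L)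
    \<and> int (alpha L 2) \<ge> 2 * int (alpha L 0) - 2 * euler_char L"
proof -
  have finL: "finite L" and ne: "\<And>s. s \<in> L \<Longrightarrow> finite s \<and> s \<noteq> {}"
    and cl: "\<And>s t. s \<in> L \<Longrightarrow> t \<subseteq> s \<Longrightarrow> t \<noteq> {} \<Longrightarrow> t \<in> L"
    using assms(1) unfolding simplicial_complex_def by blast+
  define V where "V = vertices L"
  define S0 where "S0 = simplices L 0"
  define S1 where "S1 = simplices L 1"
  define S2 where "S2 = simplices L 2"
  have sub: "\<And>s. s \<in> L \<Longrightarrow> s \<subseteq> V"
    unfolding V_def vertices_def using cl by blast
  have Vsub: "V \<subseteq> \<Union>L" unfolding V_def vertices_def by blast
  have finV: "finite V" using finL ne Vsub by (meson finite_Union finite_subset)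
  have S0eq: "S0 = (\<lambda>v. {v}) ` V" unfolding S0_def V_def simplices_def vertices_def
    by (auto simp: card_Suc_eq)
  have n: "alpha L 0 = card V" unfolding alpha_def S0_def[symmetric] S0eq
    by (simp add: card_image)
  have Lne: "L \<noteq> {}" using assms(2) unfolding connected_complex_def vertices_def by auto
  have cards: "\<And>s. s \<in> L \<Longrightarrow> card s \<le> 3"
  proof -
    fix s assume "s \<in> L"
    hence "card s - 1 \<le> dim_complex L" unfolding dim_complex_def using finL by auto
    thus "card s \<le> 3" using assms(3) by simp
  qed
  obtain t where t: "t \<in> L" "card t = 3"
  proof -
    have "dim_complex L \<in> (\<lambda>\<sigma>. card \<sigma> - 1) ` L" unfolding dim_complex_def
      using finL Lne by (intro Max_in) auto
    then obtain s where "s \<in> L" "card s - 1 = 2" using assms(3) by auto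
    moreover have "card s \<le> 3" using cards \<open>s \<in> L\<close> by blast
    ultimately have "card s = 3" by linarith
    thus ?thesis using that \<open>s \<in> L\<close> by blast
  qed
  have tS2: "t \<in> S2" using t unfolding S2_def simplices_def by simp
  obtain a b c where abc: "t = {a,b,c}" "a \<noteq> b" using t(2) by (metis card_3_iff)
  have ab1: "{a,b} \<in> S1" unfolding S1_def simplices_def using abc cl[OF t(1), of "{a,b}"] by auto
  have two: "2 \<le> card {t\<in>S2. {a,b} \<subseteq> t}" using assms(4) ab1 unfolding S1_def S2_def by blast
  have "\<exists>t'. t' \<in> S2 \<and> t' \<noteq> t"
  proof (rule ccontr)
    assume "\<not> ?thesis"
    hence "{t\<in>S2. {a,b} \<subseteq> t} \<subseteq> {t}" by auto
    hence "card {t\<in>S2. {a,b} \<subseteq> t} \<le> card {t}" by (intro card_mono) auto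
    hence "card {t\<in>S2. {a,b} \<subseteq> t} \<le> 1" by simp
    thus False using two by simp
  qed
  then obtain t' where t': "t' \<in> S2" "t' \<noteq> t" by blast
  have t'L: "t' \<in> L" "card t' = 3" using t' unfolding S2_def simplices_def by auto
  have "\<not> t' \<subseteq> t" using t'L t t'(2) by (metis card_subset_eq finite_subset ne)
  hence "t \<subset> t \<union> t'" by auto
  moreover have "t \<union> t' \<subseteq> V" using sub t(1) t'L(1) by auto
  ultimately have "card t < card V" using finV by (meson psubset_subset_trans psubset_card_mono)
  hence n4: "card V \<ge> 4" using t by simp
  have "S1 \<subseteq> {B. B \<subseteq> V \<and> card B = 2}" unfolding S1_def simplices_def using sub by auto
  hence e_le: "card S1 \<le> card V choose 2" using finV
  proof -
    have "card S1 \<le> card {B. B \<subseteq> V \<and> card B = 2}"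
      using \<open>S1 \<subseteq> _\<close> finV by (intro card_mono) auto
    thus ?thesis using finV by (simp add: n_subsets)
  qed
  have Ldecomp: "L = S0 \<union> S1 \<union> S2"
  proof -
    have "\<And>s. s \<in> L \<Longrightarrow> card s = 1 \<or> card s = 2 \<or> card s = 3"
    proof -
      fix s assume "s \<in> L"
      hence "card s \<le> 3" "card s \<noteq> 0" using cards ne by auto
      thus "card s = 1 \<or> card s = 2 \<or> card s = 3" by linarith
    qed
    thus ?thesis unfolding S0_def S1_def S2_def simplices_def
      by (auto simp del: One_nat_def; metis One_nat_def numeral_2_eq_2 numeral_3_eq_3)
  qed
  have fin1: "finite S1" and fin2: "finite S2" and fin0: "finite S0"
    unfolding S0_def S1_def S2_def simplices_def using finL by auto
  have chi: "euler_char L = int (card V) - int (card S1) + int (card S2)"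
  proof -
    have d1: "S0 \<inter> S1 = {}" "(S0 \<union> S1) \<inter> S2 = {}"
      unfolding S0_def S1_def S2_def simplices_def by auto
    have "euler_char L = (\<Sum>s\<in>S0. (-1) ^ (card s - 1)) + (\<Sum>s\<in>S1. (-1) ^ (card s - 1))
        + (\<Sum>s\<in>S2. (-1) ^ (card s - 1))"
      unfolding euler_char_def Ldecomp using fin0 fin1 fin2 d1
      by (simp add: sum.union_disjoint)
    also have "\<dots> = int (card S0) - int (card S1) + int (card S2)"
      unfolding S0_def S1_def S2_def simplices_def by simp
    finally show ?thesis using n unfolding alpha_def S0_def by simp
  qed
  have edges3: "\<And>u. u \<in> S2 \<Longrightarrow> card {e\<in>S1. e \<subseteq> u} = 3"
  proof -
    fix u assume tt: "u \<in> S2"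
    hence tL: "u \<in> L" "card u = 3" unfolding S2_def simplices_def by auto
    have "{e\<in>S1. e \<subseteq> u} = {B. B \<subseteq> u \<and> card B = 2}"
    proof (intro set_eqI iffI)
      fix x assume "x \<in> {B. B \<subseteq> u \<and> card B = 2}"
      hence "x \<subseteq> u" "card x = 2" by auto
      moreover hence "x \<noteq> {}" by auto
      ultimately show "x \<in> {e\<in>S1. e \<subseteq> u}" using cl[OF tL(1)] unfolding S1_def simplices_def by auto
    qed (auto simp: S1_def simplices_def)
    moreover have "finite u" using ne tL by blast
    ultimately show "card {e\<in>S1. e \<subseteq> u} = 3" using tL by (simp add: n_subsets choose_two)
  qed
  have "(\<Sum>e\<in>S1. card {t\<in>S2. e \<subseteq> t}) = (\<Sum>e\<in>S1. \<Sum>t\<in>S2. if e \<subseteq> t then 1 else (0::nat))"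
    using fin2 by (simp add: cardf)
  also have "\<dots> = (\<Sum>t\<in>S2. \<Sum>e\<in>S1. if e \<subseteq> t then 1 else (0::nat))" by (rule sum.swap)
  also have "\<dots> = (\<Sum>t\<in>S2. card {e\<in>S1. e \<subseteq> t})"
    using fin1 by (simp add: cardf)
  also have "\<dots> = 3 * card S2" using edges3 by simp
  finally have dc: "(\<Sum>e\<in>S1. card {t\<in>S2. e \<subseteq> t}) = 3 * card S2" .
  have "2 * card S1 \<le> (\<Sum>e\<in>S1. card {t\<in>S2. e \<subseteq> t})"
    using sum_mono[of S1 "\<lambda>_. 2" "\<lambda>e. card {t\<in>S2. e \<subseteq> t}"] assms(4)
    unfolding S1_def S2_def by auto
  hence ef: "2 * card S1 \<le> 3 * card S2" using dc by simp
  have part2: "int (alpha L 2) \<ge> 2 * int (alpha L 0) - 2 * euler_char L"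
    using ef chi n unfolding alpha_def S2_def[symmetric] by linarith
  have "2 * (card V choose 2) = card V * (card V - 1)"
  proof -
    have "even (card V * (card V - 1))" by auto
    thus ?thesis by (simp add: choose_two)
  qed
  hence quad0: "2 * int (card S1) \<le> int (card V) * (int (card V) - 1)"
  proof -
    have "2 * card S1 \<le> card V * (card V - 1)" using e_le \<open>2 * (card V choose 2) = _\<close> by linarith
    hence "int (2 * card S1) \<le> int (card V * (card V - 1))" by linarith
    thus ?thesis using n4 by (simp add: of_nat_diff)
  qed
  define N where "N = int (card V)"
  define X where "X = euler_char L"
  have quad: "N * N - 7 * N + 6 * X \<ge> 0"
  proof -
    have "3 * int (card S2) \<ge> 2 * int (card S1)" using ef by linarith
    hence "int (card S1) \<ge> 3 * (N - X)" using chi unfolding N_def X_def by (simp add: algebra_simps)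
    hence "N * (N - 1) \<ge> 6 * (N - X)" using quad0 unfolding N_def by linarith
    thus ?thesis by (simp add: algebra_simps)
  qed
  have N4: "N \<ge> 4" using n4 unfolding N_def by simp
  have "sqrt (49 - 24 * real_of_int X) \<le> 2 * real_of_int N - 7"
  proof (rule real_le_lsqrt)
    show "0 \<le> 2 * real_of_int N - 7" using N4 by simp
    have "(2 * N - 7)^2 - (49 - 24 * X) = 4 * (N * N - 7 * N + 6 * X)"
      by (simp add: power2_eq_square algebra_simps)
    hence "49 - 24 * X \<le> (2 * N - 7)^2" using quad by (rule aux)
    hence "real_of_int (49 - 24 * X) \<le> real_of_int ((2 * N - 7)^2)" by (simp only: of_int_le_iff)
    thus "49 - 24 * real_of_int X \<le> (2 * real_of_int N - 7)\<^sup>2" by (simp only: of_int_diff of_int_mult of_int_power of_int_numeral)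
  qed
  hence "7 + sqrt (49 - 24 * real_of_int X) \<le> 2 * real_of_int N" by linarith
  hence "(7 + sqrt (49 - 24 * real_of_int X)) / 2 \<le> real_of_int N" by (simp only: divide_le_eq) simp
  hence "rho X \<le> N" unfolding rho_def by (simp only: ceiling_le_iff)
  hence "rho (euler_char L) \<le> int (alpha L 0)" unfolding N_def X_def n .
  thus ?thesis using part2 by (rule conjI)
qed

end
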